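(* Let $s\ge2$ groups of positive integer moduli be given: Group $j$ ($1\le j\le s$) consists of $L_j\ge1$ moduli $0<M_{j,1}<\dots<M_{j,L_j}$; put $\delta_j=\operatorname{lcm}(M_{j,1},\dots,M_{j,L_j})$, assumed pairwise distinct. Let $T_1,\dots,T_k$ ($k\ge2$) be nonempty subsets of $\{1,\dots,s\}$ whose union is $\{1,\dots,s\}$ (the second-stage groups), let $\xi_t=\operatorname{lcm}\{\delta_j:j\in T_t\}$, assumed pairwise distinct. Let $N$ be an integer with $0\le N<\operatorname{lcm}(\delta_1,\dots,\delta_s)$, let $r_{j,i}$ be the remainder of $N$ modulo $M_{j,i}$ and $n_{j,i}=(N-r_{j,i})/M_{j,i}$. Define $G_j=\max_{i}\min_{q\ne i}\gcd(M_{j,i},M_{j,q})/4$ if $L_j\ge2$ and $G_j=M_{j,1}/4$ if $L_j=1$; $\Upsilon_t=\max_{a\in T_t}\min_{b\in T_t,b\ne a}\gcd(\delta_a,\delta_b)/4$ if $|T_t|\ge2$ and $\Upsilon_t=\delta_a/4$ if $T_t=\{a\}$; and $\Upsilon=\max_{1\le i\le k}\min_{q\ne i}\gcd(\xi_i,\xi_q)/4$. Let $\tilde r_{j,i}$ be integers with $0\le\tilde r_{j,i}\le M_{j,i}-1$ and $|\tilde r_{j,i}-r_{j,i}|\le\tau_j$ for all $i,j$, where $$\tau_j<\min\Big(G_j,\ \min\{\Upsilon_t: j\in T_t\},\ \Upsilon\Big)\quad(1\le j\le s).$$ Then the three-stage algorithm (described in the context) outputs $\hat n_{j,i}=n_{j,i}$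 for all $i,j$, and its estimate $\hat N=\left[\frac1{\sum_jL_j}\sum_{j=1}^s\sum_{i=1}^{L_j}(\hat n_{j,i}M_{j,i}+\tilde r_{j,i})\right]$ satisfies $|\hat N-N|\le\left[\frac{\sum_{j=1}^sL_j\tau_j}{\sum_{j=1}^sL_j}\right]$.
   Context: For $x\in\mathbb R$, $[x]$ denotes the unique integer with $-1/2\le x-[x]<1/2$. Single-stage algorithm $\mathcal A$: for pairwise distinct positive integers $P_1,\dots,P_m$ ($m\ge2$), a reference index $k$ and integers $x_1,\dots,x_m$: for $i\ne k$ put $m_{ki}=\gcd(P_k,P_i)$, $\Gamma_{ki}=P_k/m_{ki}$, $\Gamma_{ik}=P_i/m_{ki}$, $\hat q_{ik}=[(x_i-x_k)/m_{ki}]$, let $\bar\Gamma_{ki}$ be an inverse of $\Gamma_{ki}$ modulo $\Gamma_{ik}$ and $\hat\xi_{ik}\equiv\hat q_{ik}\bar\Gamma_{ki}\pmod{\Gamma_{ik}}$, $0\le\hat\xi_{ik}<\Gamma_{ik}$; let $\hat n_k$ be the least nonnegative $y$ with $y\equiv\hat\xi_{ik}\pmod{\Gamma_{ik}}$ for all $i\ne k$ (the algorithm fails if none exists), and $\hat n_i=(\hat n_k\Gamma_{ki}-\hat q_{ik})/\Gamma_{ik}$ for $i\ne k$. In each use below the reference index is one attaining the relevant max-min of pairwise gcds. Three-stage algorithm: Stage 1: for each $j$, if $L_j\ge2$ apply $\mathcal A$ to $M_{j,1},\dots,M_{j,L_j}$ with inputs $\tilde r_{j,i}$, obtaining $\hat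 K_{j,i}$; if $L_j=1$ set $\hat K_{j,1}=0$; put $\hat N_j=[\frac1{L_j}\sum_i(\hat K_{j,i}M_{j,i}+\tilde r_{j,i})]$. Stage 2: for each $t$, if $|T_t|\ge2$ apply $\mathcal A$ to the moduli $(\delta_j)_{j\in T_t}$ with inputs $(\hat N_j)_{j\in T_t}$, obtaining $\hat H_{t,j}$ ($j\in T_t$); if $|T_t|=1$ set $\hat H_{t,j}=0$; put $\hat P_t=[\frac1{|T_t|}\sum_{j\in T_t}(\hat H_{t,j}\delta_j+\hat N_j)]$. Stage 3: apply $\mathcal A$ to $\xi_1,\dots,\xi_k$ with inputs $\hat P_1,\dots,\hat P_k$, obtaining $\hat l_1,\dots,\hat l_k$. Output, for each $j$ and a $t$ with $j\in T_t$, $\hat n_{j,i}=\hat l_t\xi_t/M_{j,i}+\hat H_{t,j}\delta_j/M_{j,i}+\hat K_{j,i}$. *)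

theory Defs
  imports "HOL-Number_Theory.Number_Theory"
begin

text \<open>Rounding: [x] is the unique integer with -1/2 <= x - [x] < 1/2.\<close>
definition rnd :: "real \<Rightarrow> int" where
  "rnd x = \<lfloor>x + 1/2\<rfloor>"

definition maxmin_gcd :: "'a set \<Rightarrow> ('a \<Rightarrow> int) \<Rightarrow> int" where
  "maxmin_gcd I P = Max ((\<lambda>a. Min ((\<lambda>b. gcd (P a) (P b)) ` (I - {a}))) ` I)"

definition ref_ok :: "'a set \<Rightarrow> ('a \<Rightarrow> int) \<Rightarrow> 'a \<Rightarrow> bool" where
  "ref_ok I P k \<longleftrightarrow> k \<in> I \<and> Min ((\<lambda>b. gcd (P k) (P b)) ` (I - {k})) = maxmin_gcd I P"

text \<open>Single-stage algorithm A on index set I, moduli P, inputs x, reference index k.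
  None means the algorithm fails.\<close>
definition algA :: "'a set \<Rightarrow> ('a \<Rightarrow> int) \<Rightarrow> ('a \<Rightarrow> int) \<Rightarrow> 'a \<Rightarrow> ('a \<Rightarrow> int) option" where
  "algA I P x k =
    (let m = (\<lambda>i. gcd (P k) (P i));
         Gki = (\<lambda>i. P k div m i);
         Gik = (\<lambda>i. P i div m i);
         q = (\<lambda>i. rnd (of_int (x i - x k) / of_int (m i)));
         binv = (\<lambda>i. SOME y. [Gki i * y = 1] (mod Gik i));
         xi = (\<lambda>i. (q i * binv i) mod Gik i);
         good = (\<lambda>y::nat. \<forall>i\<in>I - {k}. [int y = xi i] (mod Gik i))
     in if (\<exists>y. good y) then
          (let nk = int (LEAST y. good y)
           in Some (\<lambda>i. if i = k then nk else (nk * Gki i - q i) div Gik i))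
        else None)"

definition delta :: "(nat \<Rightarrow> nat) \<Rightarrow> (nat \<Rightarrow> nat \<Rightarrow> int) \<Rightarrow> nat \<Rightarrow> int" where
  "delta L M j = Lcm (M j ` {1..L j})"

definition xi :: "(nat \<Rightarrow> nat) \<Rightarrow> (nat \<Rightarrow> nat \<Rightarrow> int) \<Rightarrow> (nat \<Rightarrow> nat set) \<Rightarrow> nat \<Rightarrow> int" where
  "xi L M T t = Lcm (delta L M ` T t)"

definition stage1 :: "(nat \<Rightarrow> nat) \<Rightarrow> (nat \<Rightarrow> nat \<Rightarrow> int) \<Rightarrow> (nat \<Rightarrow> nat \<Rightarrow> int)
    \<Rightarrow> (nat \<Rightarrow> nat) \<Rightarrow> nat \<Rightarrow> (nat \<Rightarrow> int) option" where
  "stage1 L M rt k1 j =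
     (if L j \<ge> 2 then algA {1..L j} (M j) (rt j) (k1 j) else Some (\<lambda>_. 0))"

definition Khat :: "(nat \<Rightarrow> nat) \<Rightarrow> (nat \<Rightarrow> nat \<Rightarrow> int) \<Rightarrow> (nat \<Rightarrow> nat \<Rightarrow> int)
    \<Rightarrow> (nat \<Rightarrow> nat) \<Rightarrow> nat \<Rightarrow> nat \<Rightarrow> int" where
  "Khat L M rt k1 j = the (stage1 L M rt k1 j)"

definition Nhat :: "(nat \<Rightarrow> nat) \<Rightarrow> (nat \<Rightarrow> nat \<Rightarrow> int) \<Rightarrow> (nat \<Rightarrow> nat \<Rightarrow> int)
    \<Rightarrow> (nat \<Rightarrow> nat) \<Rightarrow> nat \<Rightarrow> int" where
  "Nhat L M rt k1 j =
     rnd ((\<Sum>i=1..L j. real_of_int (Khat L M rt k1 j i * M j i + rt j i)) / real (L j))"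

definition stage2 :: "(nat \<Rightarrow> nat) \<Rightarrow> (nat \<Rightarrow> nat \<Rightarrow> int) \<Rightarrow> (nat \<Rightarrow> nat \<Rightarrow> int)
    \<Rightarrow> (nat \<Rightarrow> nat) \<Rightarrow> (nat \<Rightarrow> nat set) \<Rightarrow> (nat \<Rightarrow> nat) \<Rightarrow> nat \<Rightarrow> (nat \<Rightarrow> int) option" where
  "stage2 L M rt k1 T k2 t =
     (if card (T t) \<ge> 2 then algA (T t) (delta L M) (Nhat L M rt k1) (k2 t) else Some (\<lambda>_. 0))"

definition Hhat :: "(nat \<Rightarrow> nat) \<Rightarrow> (nat \<Rightarrow> nat \<Rightarrow> int) \<Rightarrow> (nat \<Rightarrow> nat \<Rightarrow> int)
    \<Rightarrow> (nat \<Rightarrow> nat) \<Rightarrow> (nat \<Rightarrow> nat set) \<Rightarrow> (nat \<Rightarrow> nat) \<Rightarrow> nat \<Rightarrow> nat \<Rightarrow> int" where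
  "Hhat L M rt k1 T k2 t = the (stage2 L M rt k1 T k2 t)"

definition Phat :: "(nat \<Rightarrow> nat) \<Rightarrow> (nat \<Rightarrow> nat \<Rightarrow> int) \<Rightarrow> (nat \<Rightarrow> nat \<Rightarrow> int)
    \<Rightarrow> (nat \<Rightarrow> nat) \<Rightarrow> (nat \<Rightarrow> nat set) \<Rightarrow> (nat \<Rightarrow> nat) \<Rightarrow> nat \<Rightarrow> int" where
  "Phat L M rt k1 T k2 t =
     rnd ((\<Sum>j\<in>T t. real_of_int (Hhat L M rt k1 T k2 t j * delta L M j + Nhat L M rt k1 j))
          / real (card (T t)))"

text \<open>Stage 3 (K = number k of second-stage groups).\<close>
definition stage3 :: "(nat \<Rightarrow> nat) \<Rightarrow> (nat \<Rightarrow> nat \<Rightarrow> int) \<Rightarrow> (nat \<Rightarrow> nat \<Rightarrow> int)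
    \<Rightarrow> (nat \<Rightarrow> nat) \<Rightarrow> nat \<Rightarrow> (nat \<Rightarrow> nat set) \<Rightarrow> (nat \<Rightarrow> nat) \<Rightarrow> nat \<Rightarrow> (nat \<Rightarrow> int) option" where
  "stage3 L M rt k1 K T k2 k3 = algA {1..K} (xi L M T) (Phat L M rt k1 T k2) k3"

definition three_stage_succeeds :: "nat \<Rightarrow> (nat \<Rightarrow> nat) \<Rightarrow> (nat \<Rightarrow> nat \<Rightarrow> int) \<Rightarrow> (nat \<Rightarrow> nat \<Rightarrow> int)
    \<Rightarrow> (nat \<Rightarrow> nat) \<Rightarrow> nat \<Rightarrow> (nat \<Rightarrow> nat set) \<Rightarrow> (nat \<Rightarrow> nat) \<Rightarrow> nat \<Rightarrow> bool" where
  "three_stage_succeeds s L M rt k1 K T k2 k3 \<longleftrightarrow>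
     (\<forall>j\<in>{1..s}. stage1 L M rt k1 j \<noteq> None) \<and>
     (\<forall>t\<in>{1..K}. stage2 L M rt k1 T k2 t \<noteq> None) \<and>
     stage3 L M rt k1 K T k2 k3 \<noteq> None"

text \<open>Output nhat_{j,i} computed via second-stage group t (with j in T_t).
  The quotients xi_t/M_{j,i} and delta_j/M_{j,i} are exact integers.\<close>
definition nhat :: "(nat \<Rightarrow> nat) \<Rightarrow> (nat \<Rightarrow> nat \<Rightarrow> int) \<Rightarrow> (nat \<Rightarrow> nat \<Rightarrow> int)
    \<Rightarrow> (nat \<Rightarrow> nat) \<Rightarrow> nat \<Rightarrow> (nat \<Rightarrow> nat set) \<Rightarrow> (nat \<Rightarrow> nat) \<Rightarrow> nat
    \<Rightarrow> nat \<Rightarrow> nat \<Rightarrow> nat \<Rightarrow> int" where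
  "nhat L M rt k1 K T k2 k3 t j i =
     the (stage3 L M rt k1 K T k2 k3) t * (xi L M T t div M j i)
     + Hhat L M rt k1 T k2 t j * (delta L M j div M j i)
     + Khat L M rt k1 j i"

text \<open>Final estimate of N, using for each j the group tsel j containing j.\<close>
definition Nest :: "nat \<Rightarrow> (nat \<Rightarrow> nat) \<Rightarrow> (nat \<Rightarrow> nat \<Rightarrow> int) \<Rightarrow> (nat \<Rightarrow> nat \<Rightarrow> int)
    \<Rightarrow> (nat \<Rightarrow> nat) \<Rightarrow> nat \<Rightarrow> (nat \<Rightarrow> nat set) \<Rightarrow> (nat \<Rightarrow> nat) \<Rightarrow> nat \<Rightarrow> (nat \<Rightarrow> nat) \<Rightarrow> int" where
  "Nest s L M rt k1 K T k2 k3 tsel =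
     rnd ((\<Sum>j=1..s. \<Sum>i=1..L j.
            real_of_int (nhat L M rt k1 K T k2 k3 (tsel j) j i * M j i + rt j i))
          / real (\<Sum>j=1..s. L j))"

end

theory Submission
  imports Defs
begin

lemma rnd_add_int: "rnd (of_int z + x) = z + rnd x"
  unfolding rnd_def by (metis add.assoc add.commute floor_add_int)

lemma rnd_int: "rnd (of_int z) = z"
  using rnd_add_int[of z 0] by (simp add: rnd_def)

lemma rnd_small: "\<bar>x\<bar> < 1/2 \<Longrightarrow> rnd x = 0"
proof -
  assume "\<bar>x\<bar> < 1/2"
  hence "0 \<le> x + 1/2" "x + 1/2 < 1" by linarith+
  thus ?thesis unfolding rnd_def by (simp add: floor_eq_iff)
qed

lemma rnd_mono: "x \<le> y \<Longrightarrow> rnd x \<le> rnd y"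
  unfolding rnd_def by (simp add: floor_mono)

lemma rnd_abs_mono: "\<bar>z\<bar> \<le> S \<Longrightarrow> \<bar>rnd z\<bar> \<le> rnd S"
proof -
  assume a: "\<bar>z\<bar> \<le> S"
  have 1: "rnd z \<le> rnd S" using a by (intro rnd_mono) auto
  have "rnd (-S) \<le> rnd z" using a by (intro rnd_mono) auto
  moreover have "- rnd S \<le> rnd (-S)"
    unfolding rnd_def by linarith
  ultimately show ?thesis using 1 by auto
qed

lemma rnd_avg_bound:
  fixes e :: "'a \<Rightarrow> int"
  assumes "finite A" "A \<noteq> {}" "\<forall>i\<in>A. \<bar>real_of_int (e i)\<bar> \<le> c"
  shows "\<bar>real_of_int (rnd ((\<Sum>i\<in>A. real_of_int (e i)) / real (card A)))\<bar> \<le> c"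
proof -
  define F where "F = \<lfloor>c\<rfloor>"
  have eb: "\<forall>i\<in>A. \<bar>e i\<bar> \<le> F" using assms(3) unfolding F_def
    by (metis abs_le_iff le_floor_iff of_int_minus)
  have cA: "real (card A) > 0" using assms by auto
  have "(\<Sum>i\<in>A. real_of_int (e i)) \<le> (\<Sum>i\<in>A. real_of_int F)"
    by (intro sum_mono) (use eb in auto)
  hence u: "(\<Sum>i\<in>A. real_of_int (e i)) / real (card A) \<le> of_int F"
    using cA by (simp add: divide_le_eq mult.commute)
  have "(\<Sum>i\<in>A. real_of_int (-F)) \<le> (\<Sum>i\<in>A. real_of_int (e i))"
    by (intro sum_mono) (use eb in auto)
  hence l: "of_int (-F) \<le> (\<Sum>i\<in>A. real_of_int (e i)) / real (card A)"
    using cA by (simp add: le_divide_eq mult.commute)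
  have "rnd ((\<Sum>i\<in>A. real_of_int (e i)) / real (card A)) \<le> F"
    using rnd_mono[OF u] rnd_int[of F] by simp
  moreover have "-F \<le> rnd ((\<Sum>i\<in>A. real_of_int (e i)) / real (card A))"
    using rnd_mono[OF l] rnd_int[of "-F"] by simp
  ultimately have "\<bar>rnd ((\<Sum>i\<in>A. real_of_int (e i)) / real (card A))\<bar> \<le> F" by auto
  moreover have "real_of_int F \<le> c" unfolding F_def by simp
  ultimately show ?thesis by (metis of_int_abs of_int_le_iff order_trans)
qed

lemma algA_correct:
  fixes I :: "'a set" and P x e :: "'a \<Rightarrow> int" and X :: int and k :: 'a
  assumes kI: "k \<in> I" and Ppos: "\<forall>i\<in>I. 0 < P i"
    and X0: "0 \<le> X" and XL: "X < Lcm (P ` I)"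
    and xe: "\<forall>i\<in>I. x i = X mod P i + e i"
    and err: "\<forall>i\<in>I - {k}. 2 * \<bar>e i - e k\<bar> < gcd (P k) (P i)"
  shows "\<exists>f. algA I P x k = Some f \<and> (\<forall>i\<in>I. f i = X div P i)"
proof -
  define m where "m = (\<lambda>i. gcd (P k) (P i))"
  define Gki where "Gki = (\<lambda>i. P k div m i)"
  define Gik where "Gik = (\<lambda>i. P i div m i)"
  define q where "q = (\<lambda>i. rnd (of_int (x i - x k) / of_int (m i)))"
  define binv where "binv = (\<lambda>i. SOME y. [Gki i * y = 1] (mod Gik i))"
  define xx where "xx = (\<lambda>i. (q i * binv i) mod Gik i)"
  define good where "good = (\<lambda>y::nat. \<forall>i\<in>I - {k}. [int y = xx i] (mod Gik i))"
  define n where "n = (\<lambda>i. X div P i)"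
  have Pk: "0 < P k" using kI Ppos by auto
  have nk0: "0 \<le> n k" unfolding n_def using X0 Pk by (simp add: pos_imp_zdiv_nonneg_iff)
  have facts: "0 < m i \<and> P k = Gki i * m i \<and> P i = Gik i * m i \<and> 0 < Gik i
      \<and> q i = n k * Gki i - n i * Gik i \<and> [n k = xx i] (mod Gik i)" if iI: "i \<in> I - {k}" for i
  proof -
    have Pi: "0 < P i" using iI Ppos by auto
    have m0: "0 < m i" unfolding m_def using Pk by simp
    have h1: "P k = Gki i * m i" unfolding Gki_def m_def by simp
    have h2: "P i = Gik i * m i" unfolding Gik_def m_def by simp
    have G0: "0 < Gik i" using h2 Pi m0 by (metis zero_less_mult_pos2)
    have cop: "coprime (Gki i) (Gik i)" unfolding Gki_def Gik_def m_def
      using Pk by (intro div_gcd_coprime) auto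
    define D where "D = n k * Gki i - n i * Gik i"
    have xk: "x k = X mod P k + e k" using xe kI by auto
    have xi: "x i = X mod P i + e i" using xe iI by auto
    have "X mod P k = X - n k * P k" "X mod P i = X - n i * P i"
      unfolding n_def by (simp_all add: minus_div_mult_eq_mod)
    hence dif: "x i - x k = D * m i + (e i - e k)" unfolding D_def using xk xi h1 h2
      by (simp add: algebra_simps)
    have "of_int (x i - x k) / of_int (m i) = real_of_int D + real_of_int (e i - e k) / of_int (m i)"
      using m0 by (simp add: dif field_simps)
    moreover have "\<bar>real_of_int (e i - e k) / of_int (m i)\<bar> < 1/2"
    proof -
      have "2 * \<bar>e i - e k\<bar> < m i" using err iI unfolding m_def by auto
      hence "real_of_int (2 * \<bar>e i - e k\<bar>) < real_of_int (m i)"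
        by (simp only: of_int_less_iff)
      hence "2 * \<bar>real_of_int (e i - e k)\<bar> < real_of_int (m i)" by simp
      thus ?thesis using m0 by (simp add: abs_divide field_simps)
    qed
    ultimately have qD: "q i = D" unfolding q_def using rnd_add_int rnd_small by simp
    have "\<exists>y. [Gki i * y = 1] (mod Gik i)" using cop by (rule cong_solve_coprime_int)
    hence bi: "[Gki i * binv i = 1] (mod Gik i)" unfolding binv_def by (rule someI_ex)
    have "[xx i = q i * binv i] (mod Gik i)" unfolding xx_def by (simp add: cong_def)
    moreover have "[q i * binv i = n k * (Gki i * binv i)] (mod Gik i)"
      unfolding qD D_def cong_iff_dvd_diff by (simp add: algebra_simps)
    moreover have "[n k * (Gki i * binv i) = n k * 1] (mod Gik i)"
      using bi by (intro cong_mult) auto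
    ultimately have "[xx i = n k] (mod Gik i)" by (auto intro: cong_trans)
    thus ?thesis using m0 h1 h2 G0 qD D_def by (simp add: cong_sym_eq)
  qed
  have gn: "good (nat (n k))" unfolding good_def using facts nk0 by (simp add: cong_sym_eq)
  define y0 where "y0 = (LEAST y. good y)"
  have gy0: "good y0" unfolding y0_def using gn by (rule LeastI)
  have y0le: "y0 \<le> nat (n k)" unfolding y0_def using gn by (rule Least_le)
  define d where "d = n k - int y0"
  have d0: "0 \<le> d" unfolding d_def using y0le nk0 by linarith
  have dvdP: "P i dvd d * P k" if iI: "i \<in> I" for i
  proof (cases "i = k")
    case True thus ?thesis by simp
  next
    case False
    hence iI': "i \<in> I - {k}" using iI by auto
    have "[int y0 = xx i] (mod Gik i)" using gy0 iI' unfolding good_def by auto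
    moreover have "[n k = xx i] (mod Gik i)" using facts iI' by auto
    ultimately have "[n k = int y0] (mod Gik i)" by (meson cong_sym cong_trans)
    hence "Gik i dvd d" unfolding d_def cong_iff_dvd_diff .
    then obtain c where c: "d = Gik i * c" by auto
    have "d * P k = P i * (c * Gki i)" using facts[OF iI'] c by (simp add: algebra_simps)
    thus ?thesis by simp
  qed
  have "d = 0"
  proof (rule ccontr)
    assume "d \<noteq> 0"
    hence dp: "0 < d * P k" using d0 Pk by simp
    have "Lcm (P ` I) dvd d * P k" using dvdP by (intro Lcm_least) auto
    hence "Lcm (P ` I) \<le> d * P k" using dp by (rule zdvd_imp_le)
    moreover have "d * P k \<le> n k * P k" unfolding d_def using Pk by simp
    moreover have "n k * P k \<le> X" unfolding n_def
      by (metis X0 div_mult_mod_eq le_add_same_cancel1 pos_mod_sign Pk)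
    ultimately show False using XL by linarith
  qed
  hence y0n: "int y0 = n k" unfolding d_def by simp
  have ex: "\<exists>y. good y" using gn by auto
  have alg: "algA I P x k = Some (\<lambda>i. if i = k then int y0 else (int y0 * Gki i - q i) div Gik i)"
    using ex unfolding algA_def Let_def y0_def good_def xx_def binv_def q_def Gik_def Gki_def m_def
    by simp
  show ?thesis
  proof (intro exI conjI ballI)
    show "algA I P x k = Some (\<lambda>i. if i = k then int y0 else (int y0 * Gki i - q i) div Gik i)"
      by (rule alg)
  next
    fix i assume iI: "i \<in> I"
    show "(if i = k then int y0 else (int y0 * Gki i - q i) div Gik i) = X div P i"
    proof (cases "i = k")
      case True thus ?thesis using y0n n_def by simp
    next
      case False
      hence "i \<in> I - {k}" using iI by auto
      from facts[OF this] have "int y0 * Gki i - q i = n i * Gik i" "0 < Gik i"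
        using y0n by auto
      thus ?thesis using n_def False by simp
    qed
  qed
qed

lemma err_cond:
  fixes P e :: "'a \<Rightarrow> int"
  assumes fin: "finite I" and ok: "ref_ok I P k" and iI: "i \<in> I - {k}"
    and b1: "\<bar>real_of_int (e i)\<bar> \<le> c1" and b2: "\<bar>real_of_int (e k)\<bar> \<le> c2"
    and c1: "c1 < real_of_int (maxmin_gcd I P) / 4" and c2: "c2 < real_of_int (maxmin_gcd I P) / 4"
  shows "2 * \<bar>e i - e k\<bar> < gcd (P k) (P i)"
proof -
  have "Min ((\<lambda>b. gcd (P k) (P b)) ` (I - {k})) \<le> gcd (P k) (P i)"
    using fin iI by (intro Min_le) auto
  hence "maxmin_gcd I P \<le> gcd (P k) (P i)" using ok unfolding ref_ok_def by simp
  hence "real_of_int (maxmin_gcd I P) \<le> real_of_int (gcd (P k) (P i))" by simp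
  moreover have "2 * \<bar>real_of_int (e i) - real_of_int (e k)\<bar> \<le> 2 * (c1 + c2)" using b1 b2 by (auto simp: abs_if split: if_splits)
  ultimately have "real_of_int (2 * \<bar>e i - e k\<bar>) < real_of_int (gcd (P k) (P i))"
    using c1 c2 by simp
  thus ?thesis by (simp only: of_int_less_iff)
qed

lemma div_chain:
  fixes N a b c :: int
  assumes c0: "0 < c" and cb: "c dvd b" and ba: "b dvd a" and a0: "0 < a"
  shows "(N div a) * (a div c) + ((N mod a) div b) * (b div c) + ((N mod b) div c) = N div c"
proof -
  obtain a' where a': "a = c * a'" using cb ba by (meson dvd_trans dvdE)
  obtain b' where b': "b = c * b'" using cb by (meson dvdE)
  have ad: "a div c = a'" using a' c0 by simp
  have bd: "b div c = b'" using b' c0 by simp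
  define u where "u = N div a"
  define v where "v = N mod a div b"
  define w where "w = N mod b div c"
  have m: "(N mod a) mod b = N mod b" using ba by (simp add: mod_mod_cancel)
  have e1: "N = u * a + N mod a" unfolding u_def by simp
  have e2: "N mod a = v * b + N mod b" unfolding v_def using m by (metis div_mult_mod_eq)
  have m2: "(N mod b) mod c = N mod c" using cb by (simp add: mod_mod_cancel)
  have e3: "N mod b = w * c + N mod c" unfolding w_def using m2 by (metis div_mult_mod_eq)
  define S where "S = u * a' + v * b' + w"
  have "N = u * a + v * b + w * c + N mod c" using e1 e2 e3 by linarith
  also have "u * a + v * b + w * c = c * S" unfolding S_def a' b' by (simp add: algebra_simps)
  finally have "N = c * S + N mod c" .
  hence "N div c = (N mod c + c * S) div c" by (simp add: add.commute)
  also have "\<dots> = S" using c0 by simp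
  finally show ?thesis unfolding S_def u_def v_def w_def ad bd by simp
qed

theorem theorem4:
  fixes s K :: nat and L :: "nat \<Rightarrow> nat" and M :: "nat \<Rightarrow> nat \<Rightarrow> int"
    and T :: "nat \<Rightarrow> nat set" and N :: int and rt :: "nat \<Rightarrow> nat \<Rightarrow> int"
    and tau :: "nat \<Rightarrow> real"
    and k1 k2 :: "nat \<Rightarrow> nat" and k3 :: nat and tsel :: "nat \<Rightarrow> nat"
  assumes s2: "s \<ge> 2"
    and L1: "\<forall>j\<in>{1..s}. L j \<ge> 1"
    and Mpos: "\<forall>j\<in>{1..s}. 0 < M j 1"
    and Mincr: "\<forall>j\<in>{1..s}. \<forall>i. 1 \<le> i \<and> i < L j \<longrightarrow> M j i < M j (i + 1)"
    and delta_dist: "inj_on (delta L M) {1..s}"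
    and K2: "K \<ge> 2"
    and T_ne: "\<forall>t\<in>{1..K}. T t \<noteq> {} \<and> T t \<subseteq> {1..s}"
    and T_cover: "(\<Union>t\<in>{1..K}. T t) = {1..s}"
    and xi_dist: "inj_on (xi L M T) {1..K}"
    and N_range: "0 \<le> N" "N < Lcm (delta L M ` {1..s})"
    and rt_range: "\<forall>j\<in>{1..s}. \<forall>i\<in>{1..L j}. 0 \<le> rt j i \<and> rt j i \<le> M j i - 1"
    and rt_err: "\<forall>j\<in>{1..s}. \<forall>i\<in>{1..L j}. \<bar>real_of_int (rt j i - N mod M j i)\<bar> \<le> tau j"
    and tau_G: "\<forall>j\<in>{1..s}. tau j <
         (if L j \<ge> 2 then real_of_int (maxmin_gcd {1..L j} (M j)) / 4
          else real_of_int (M j 1) / 4)"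
    and tau_Ups_t: "\<forall>j\<in>{1..s}. \<forall>t\<in>{1..K}. j \<in> T t \<longrightarrow> tau j <
         (if card (T t) \<ge> 2 then real_of_int (maxmin_gcd (T t) (delta L M)) / 4
          else real_of_int (delta L M (the_elem (T t))) / 4)"
    and tau_Ups: "\<forall>j\<in>{1..s}. tau j < real_of_int (maxmin_gcd {1..K} (xi L M T)) / 4"
    and k1_ok: "\<forall>j\<in>{1..s}. L j \<ge> 2 \<longrightarrow> ref_ok {1..L j} (M j) (k1 j)"
    and k2_ok: "\<forall>t\<in>{1..K}. card (T t) \<ge> 2 \<longrightarrow> ref_ok (T t) (delta L M) (k2 t)"
    and k3_ok: "ref_ok {1..K} (xi L M T) k3"
    and tsel_ok: "\<forall>j\<in>{1..s}. tsel j \<in> {1..K} \<and> j \<in> T (tsel j)"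
  shows "three_stage_succeeds s L M rt k1 K T k2 k3
    \<and> (\<forall>j\<in>{1..s}. \<forall>i\<in>{1..L j}. \<forall>t\<in>{1..K}. j \<in> T t \<longrightarrow>
          nhat L M rt k1 K T k2 k3 t j i = (N - N mod M j i) div M j i)
    \<and> \<bar>Nest s L M rt k1 K T k2 k3 tsel - N\<bar>
        \<le> rnd ((\<Sum>j=1..s. real (L j) * tau j) / real (\<Sum>j=1..s. L j))"
proof -
  have Mp: "0 < M j i" if j: "j \<in> {1..s}" and i: "i \<in> {1..L j}" for j i
  proof -
    have "1 \<le> i \<longrightarrow> i \<le> L j \<longrightarrow> 0 < M j i" for i
    proof (induction i)
      case 0 thus ?case by simp
    next
      case (Suc i)
      show ?case
      proof (cases "i = 0")
        case True thus ?thesis using Mpos j by simp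
      next
        case False
        show ?thesis
        proof (intro impI)
          assume a: "1 \<le> Suc i" "Suc i \<le> L j"
          hence "0 < M j i" using Suc False by simp
          moreover have "M j i < M j (i+1)" using Mincr j False a by simp
          ultimately show "0 < M j (Suc i)" by simp
        qed
      qed
    qed
    thus ?thesis using i by simp
  qed
  have dpos: "0 < delta L M j" if j: "j \<in> {1..s}" for j
  proof -
    have "0 \<notin> M j ` {1..L j}" using Mp[OF j] by force
    hence "Lcm (M j ` {1..L j}) \<noteq> 0" using Lcm_0_iff[of "M j ` {1..L j}"] by simp
    moreover have "0 \<le> Lcm (M j ` {1..L j})" by simp
    ultimately show ?thesis unfolding delta_def by linarith
  qed
  have Mdvd: "M j i dvd delta L M j" if "i \<in> {1..L j}" for j i
    unfolding delta_def using that by (intro dvd_Lcm) auto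
  have Tsub: "T t \<subseteq> {1..s}" "finite (T t)" "T t \<noteq> {}" if "t \<in> {1..K}" for t
    using T_ne that finite_subset[of "T t" "{1..s}"] by auto
  have xpos: "0 < xi L M T t" if t: "t \<in> {1..K}" for t
  proof -
    have "0 \<notin> delta L M ` T t" using dpos Tsub[OF t] by force
    hence "Lcm (delta L M ` T t) \<noteq> 0" using Lcm_0_iff[of "delta L M ` T t"] Tsub[OF t] by simp
    moreover have "0 \<le> Lcm (delta L M ` T t)" by simp
    ultimately show ?thesis unfolding xi_def by linarith
  qed
  have xdvd: "delta L M j dvd xi L M T t" if "j \<in> T t" for j t
    unfolding xi_def using that by (intro dvd_Lcm) auto
  have Lxi: "0 < Lcm (xi L M T ` {1..K})"
  proof -
    have "0 \<notin> xi L M T ` {1..K}" using xpos by force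
    hence "Lcm (xi L M T ` {1..K}) \<noteq> 0" using Lcm_0_iff[of "xi L M T ` {1..K}"] by simp
    moreover have "0 \<le> Lcm (xi L M T ` {1..K})" by simp
    ultimately show ?thesis by linarith
  qed
  have "Lcm (delta L M ` {1..s}) dvd Lcm (xi L M T ` {1..K})"
  proof (rule Lcm_least)
    fix b assume "b \<in> delta L M ` {1..s}"
    then obtain j where j: "j \<in> {1..s}" "b = delta L M j" by auto
    have "j \<in> (\<Union>t\<in>{1..K}. T t)" using T_cover j(1) by simp
    then obtain t where t: "t \<in> {1..K}" "j \<in> T t" by blast
    have "xi L M T t dvd Lcm (xi L M T ` {1..K})" using t by (intro dvd_Lcm) auto
    thus "b dvd Lcm (xi L M T ` {1..K})" using xdvd[OF t(2)] j by (meson dvd_trans)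
  qed
  hence NL: "N < Lcm (xi L M T ` {1..K})" using zdvd_imp_le[OF _ Lxi] N_range by force
  define e where "e = (\<lambda>j i. rt j i - N mod M j i)"
  have eb: "\<bar>real_of_int (e j i)\<bar> \<le> tau j" if "j \<in> {1..s}" "i \<in> {1..L j}" for j i
    using rt_err that unfolding e_def by auto
  have st1: "stage1 L M rt k1 j \<noteq> None \<and>
      (\<forall>i\<in>{1..L j}. Khat L M rt k1 j i = (N mod delta L M j) div M j i)" if j: "j \<in> {1..s}" for j
  proof (cases "L j \<ge> 2")
    case True
    have ok: "ref_ok {1..L j} (M j) (k1 j)" using k1_ok j True by auto
    have kI: "k1 j \<in> {1..L j}" using ok unfolding ref_ok_def by simp
    have "\<exists>f. algA {1..L j} (M j) (rt j) (k1 j) = Some f \<and>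
        (\<forall>i\<in>{1..L j}. f i = (N mod delta L M j) div M j i)"
    proof (rule algA_correct[where e="e j"])
      show "k1 j \<in> {1..L j}" by (rule kI)
      show "\<forall>i\<in>{1..L j}. 0 < M j i" using Mp j by simp
      show "0 \<le> N mod delta L M j" using dpos[OF j] by simp
      show "N mod delta L M j < Lcm (M j ` {1..L j})"
        using dpos[OF j] pos_mod_bound[of "delta L M j" N] unfolding delta_def by simp
      show "\<forall>i\<in>{1..L j}. rt j i = N mod delta L M j mod M j i + e j i"
        using Mdvd by (simp add: e_def mod_mod_cancel)
      show "\<forall>i\<in>{1..L j} - {k1 j}. 2 * \<bar>e j i - e j (k1 j)\<bar> < gcd (M j (k1 j)) (M j i)"
      proof
        fix i assume i: "i \<in> {1..L j} - {k1 j}"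
        have tg: "tau j < real_of_int (maxmin_gcd {1..L j} (M j)) / 4" 
        proof -
          have "tau j < (if L j \<ge> 2 then real_of_int (maxmin_gcd {1..L j} (M j)) / 4
             else real_of_int (M j 1) / 4)" using tau_G j by blast
          thus ?thesis using True by (simp only: if_P)
        qed
        show "2 * \<bar>e j i - e j (k1 j)\<bar> < gcd (M j (k1 j)) (M j i)"
          by (rule err_cond[OF _ ok i, of "e j" "tau j" "tau j"]) (use eb j i kI tg in auto)
      qed
    qed
    then obtain f where f: "algA {1..L j} (M j) (rt j) (k1 j) = Some f"
      "\<forall>i\<in>{1..L j}. f i = (N mod delta L M j) div M j i" by blast
    thus ?thesis using True by (simp add: stage1_def Khat_def)
  next
    case False
    hence L1': "L j = 1" using L1 j by fastforce
    have m1: "0 < M j 1" using Mpos j by auto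
    have "delta L M j = M j 1" using L1' m1 by (simp add: delta_def)
    thus ?thesis using False L1' m1 by (simp add: stage1_def Khat_def div_pos_pos_trivial)
  qed
  define E where "E = (\<lambda>j. Nhat L M rt k1 j - N mod delta L M j)"
  have Eb: "\<bar>real_of_int (E j)\<bar> \<le> tau j" if j: "j \<in> {1..s}" for j
  proof -
    define Y where "Y = N mod delta L M j"
    have Lp: "0 < L j" using L1 j by fastforce
    have terms: "Khat L M rt k1 j i * M j i + rt j i = Y + e j i" if i: "i \<in> {1..L j}" for i
    proof -
      have "Khat L M rt k1 j i = Y div M j i" using st1[OF j] i Y_def by simp
      moreover have "rt j i = Y mod M j i + e j i"
        unfolding Y_def e_def using Mdvd[OF i] by (simp add: mod_mod_cancel)
      ultimately show ?thesis by simp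
    qed
    have "(\<Sum>i=1..L j. real_of_int (Khat L M rt k1 j i * M j i + rt j i))
        = (\<Sum>i=1..L j. real_of_int Y + real_of_int (e j i))"
      by (rule sum.cong) (simp_all add: terms)
    also have "\<dots> = real (L j) * real_of_int Y + (\<Sum>i=1..L j. real_of_int (e j i))"
      by (simp add: sum.distrib)
    finally have "(\<Sum>i=1..L j. real_of_int (Khat L M rt k1 j i * M j i + rt j i)) / real (L j)
        = real_of_int Y + (\<Sum>i\<in>{1..L j}. real_of_int (e j i)) / real (card {1..L j})"
      using Lp by (simp add: field_simps)
    hence "Nhat L M rt k1 j = Y + rnd ((\<Sum>i\<in>{1..L j}. real_of_int (e j i)) / real (card {1..L j}))"
      unfolding Nhat_def by (simp add: rnd_add_int)
    hence "E j = rnd ((\<Sum>i\<in>{1..L j}. real_of_int (e j i)) / real (card {1..L j}))"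
      unfolding E_def Y_def by simp
    moreover have "\<bar>real_of_int (rnd ((\<Sum>i\<in>{1..L j}. real_of_int (e j i)) / real (card {1..L j})))\<bar> \<le> tau j"
      using Lp eb[OF j] by (intro rnd_avg_bound) auto
    ultimately show ?thesis by simp
  qed
  have st2: "stage2 L M rt k1 T k2 t \<noteq> None \<and>
      (\<forall>j\<in>T t. Hhat L M rt k1 T k2 t j = (N mod xi L M T t) div delta L M j)" if t: "t \<in> {1..K}" for t
  proof (cases "card (T t) \<ge> 2")
    case True
    have ok: "ref_ok (T t) (delta L M) (k2 t)" using k2_ok t True by auto
    have kI: "k2 t \<in> T t" using ok unfolding ref_ok_def by simp
    have "\<exists>f. algA (T t) (delta L M) (Nhat L M rt k1) (k2 t) = Some f \<and>
        (\<forall>j\<in>T t. f j = (N mod xi L M T t) div delta L M j)"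
    proof (rule algA_correct[where e=E])
      show "k2 t \<in> T t" by (rule kI)
      show "\<forall>j\<in>T t. 0 < delta L M j" using dpos Tsub[OF t] by auto
      show "0 \<le> N mod xi L M T t" using xpos[OF t] by simp
      show "N mod xi L M T t < Lcm (delta L M ` T t)"
        using xpos[OF t] pos_mod_bound[of "xi L M T t" N] unfolding xi_def by simp
      show "\<forall>j\<in>T t. Nhat L M rt k1 j = N mod xi L M T t mod delta L M j + E j"
        using xdvd by (simp add: E_def mod_mod_cancel)
      show "\<forall>j\<in>T t - {k2 t}. 2 * \<bar>E j - E (k2 t)\<bar> < gcd (delta L M (k2 t)) (delta L M j)"
      proof
        fix j assume j: "j \<in> T t - {k2 t}"
        have js: "j \<in> {1..s}" "k2 t \<in> {1..s}" using j kI Tsub[OF t] by auto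
        have tg: "tau j < real_of_int (maxmin_gcd (T t) (delta L M)) / 4"
          "tau (k2 t) < real_of_int (maxmin_gcd (T t) (delta L M)) / 4"
        proof -
          have jT: "j \<in> T t" using j by simp
          have "tau j < (if card (T t) \<ge> 2 then real_of_int (maxmin_gcd (T t) (delta L M)) / 4
             else real_of_int (delta L M (the_elem (T t))) / 4)"
            using tau_Ups_t js(1) t jT by blast
          moreover have "tau (k2 t) < (if card (T t) \<ge> 2 then real_of_int (maxmin_gcd (T t) (delta L M)) / 4
             else real_of_int (delta L M (the_elem (T t))) / 4)"
            using tau_Ups_t js(2) t kI by blast
          ultimately show "tau j < real_of_int (maxmin_gcd (T t) (delta L M)) / 4"
            "tau (k2 t) < real_of_int (maxmin_gcd (T t) (delta L M)) / 4"
            using True by (simp_all only: if_P)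
        qed
        show "2 * \<bar>E j - E (k2 t)\<bar> < gcd (delta L M (k2 t)) (delta L M j)"
          by (rule err_cond[OF Tsub(2)[OF t] ok j, of E "tau j" "tau (k2 t)"])
             (use Eb js tg in auto)
      qed
    qed
    then obtain f where f: "algA (T t) (delta L M) (Nhat L M rt k1) (k2 t) = Some f"
      "\<forall>j\<in>T t. f j = (N mod xi L M T t) div delta L M j" by blast
    thus ?thesis using True by (simp add: stage2_def Hhat_def)
  next
    case False
    have "card (T t) \<noteq> 0" using Tsub[OF t] by simp
    hence "card (T t) = 1" using False by linarith
    then obtain a where a: "T t = {a}" by (rule card_1_singletonE)
    have as: "a \<in> {1..s}" using Tsub[OF t] a by auto
    have "xi L M T t = delta L M a" using a dpos[OF as] by (simp add: xi_def)
    thus ?thesis using False a dpos[OF as] by (simp add: stage2_def Hhat_def div_pos_pos_trivial)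
  qed
  define E3 where "E3 = (\<lambda>t. Phat L M rt k1 T k2 t - N mod xi L M T t)"
  define U where "U = real_of_int (maxmin_gcd {1..K} (xi L M T)) / 4"
  have E3b: "\<exists>c. \<bar>real_of_int (E3 t)\<bar> \<le> c \<and> c < U" if t: "t \<in> {1..K}" for t
  proof -
    define Z where "Z = N mod xi L M T t"
    have terms: "Hhat L M rt k1 T k2 t j * delta L M j + Nhat L M rt k1 j = Z + E j" if j: "j \<in> T t" for j
    proof -
      have "Hhat L M rt k1 T k2 t j = Z div delta L M j" using st2[OF t] j Z_def by simp
      moreover have "Nhat L M rt k1 j = Z mod delta L M j + E j"
        unfolding Z_def E_def using xdvd[OF j] by (simp add: mod_mod_cancel)
      ultimately show ?thesis by simp
    qed
    have cp: "0 < card (T t)" using Tsub[OF t] by (simp add: card_gt_0_iff)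
    have "(\<Sum>j\<in>T t. real_of_int (Hhat L M rt k1 T k2 t j * delta L M j + Nhat L M rt k1 j))
        = (\<Sum>j\<in>T t. real_of_int Z + real_of_int (E j))"
      by (rule sum.cong) (simp_all add: terms)
    also have "\<dots> = real (card (T t)) * real_of_int Z + (\<Sum>j\<in>T t. real_of_int (E j))"
      by (simp add: sum.distrib)
    finally have "(\<Sum>j\<in>T t. real_of_int (Hhat L M rt k1 T k2 t j * delta L M j + Nhat L M rt k1 j))
        / real (card (T t)) = real_of_int Z + (\<Sum>j\<in>T t. real_of_int (E j)) / real (card (T t))"
      using cp by (simp add: field_simps)
    hence "Phat L M rt k1 T k2 t = Z + rnd ((\<Sum>j\<in>T t. real_of_int (E j)) / real (card (T t)))"
      unfolding Phat_def by (simp add: rnd_add_int)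
    hence E3eq: "E3 t = rnd ((\<Sum>j\<in>T t. real_of_int (E j)) / real (card (T t)))"
      unfolding E3_def Z_def by simp
    define c where "c = Max (tau ` T t)"
    have "c \<in> tau ` T t" unfolding c_def using Tsub[OF t] by (intro Max_in) auto
    then obtain j0 where j0: "j0 \<in> T t" "c = tau j0" by auto
    have "j0 \<in> {1..s}" using j0 Tsub[OF t] by auto
    hence cU: "c < U" unfolding U_def using j0 tau_Ups by blast
    have "\<forall>j\<in>T t. \<bar>real_of_int (E j)\<bar> \<le> c"
    proof
      fix j assume j: "j \<in> T t"
      have "tau j \<le> c" unfolding c_def using j Tsub[OF t] by (intro Max_ge) auto
      thus "\<bar>real_of_int (E j)\<bar> \<le> c" using Eb[of j] j Tsub[OF t] by force
    qed
    hence "\<bar>real_of_int (E3 t)\<bar> \<le> c" unfolding E3eq using Tsub[OF t] by (intro rnd_avg_bound) auto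
    thus ?thesis using cU by blast
  qed
  have k3I: "k3 \<in> {1..K}" using k3_ok unfolding ref_ok_def by simp
  have "\<exists>f. algA {1..K} (xi L M T) (Phat L M rt k1 T k2) k3 = Some f \<and>
      (\<forall>t\<in>{1..K}. f t = N div xi L M T t)"
  proof (rule algA_correct[where e=E3])
    show "k3 \<in> {1..K}" by (rule k3I)
    show "\<forall>t\<in>{1..K}. 0 < xi L M T t" using xpos by simp
    show "0 \<le> N" using N_range by simp
    show "N < Lcm (xi L M T ` {1..K})" by (rule NL)
    show "\<forall>t\<in>{1..K}. Phat L M rt k1 T k2 t = N mod xi L M T t + E3 t" by (simp add: E3_def)
    show "\<forall>t\<in>{1..K} - {k3}. 2 * \<bar>E3 t - E3 k3\<bar> < gcd (xi L M T k3) (xi L M T t)"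
    proof
      fix t assume t: "t \<in> {1..K} - {k3}"
      obtain c1 where c1: "\<bar>real_of_int (E3 t)\<bar> \<le> c1" "c1 < U" using E3b t by blast
      obtain c2 where c2: "\<bar>real_of_int (E3 k3)\<bar> \<le> c2" "c2 < U" using E3b k3I by blast
      show "2 * \<bar>E3 t - E3 k3\<bar> < gcd (xi L M T k3) (xi L M T t)"
        by (rule err_cond[OF _ k3_ok t c1(1) c2(1)]) (use c1 c2 U_def in auto)
    qed
  qed
  then obtain f where f: "algA {1..K} (xi L M T) (Phat L M rt k1 T k2) k3 = Some f"
    "\<forall>t\<in>{1..K}. f t = N div xi L M T t" by blast
  have st3: "stage3 L M rt k1 K T k2 k3 = Some f" using f by (simp add: stage3_def)
  have succ: "three_stage_succeeds s L M rt k1 K T k2 k3"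
    unfolding three_stage_succeeds_def using st1 st2 st3 by simp
  have nh: "nhat L M rt k1 K T k2 k3 t j i = N div M j i"
    if j: "j \<in> {1..s}" and i: "i \<in> {1..L j}" and t: "t \<in> {1..K}" and jt: "j \<in> T t" for j i t
  proof -
    have "nhat L M rt k1 K T k2 k3 t j i = (N div xi L M T t) * (xi L M T t div M j i)
        + ((N mod xi L M T t) div delta L M j) * (delta L M j div M j i)
        + ((N mod delta L M j) div M j i)"
      unfolding nhat_def using st3 f st1[OF j] st2[OF t] i t jt by simp
    also have "\<dots> = N div M j i"
      by (rule div_chain[OF Mp[OF j i] Mdvd[OF i] xdvd[OF jt] xpos[OF t]])
    finally show ?thesis .
  qed
  have part2: "\<forall>j\<in>{1..s}. \<forall>i\<in>{1..L j}. \<forall>t\<in>{1..K}. j \<in> T t \<longrightarrow>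
          nhat L M rt k1 K T k2 k3 t j i = (N - N mod M j i) div M j i"
  proof (intro ballI impI)
    fix j i t assume a: "j \<in> {1..s}" "i \<in> {1..L j}" "t \<in> {1..K}" "j \<in> T t"
    have "(N - N mod M j i) div M j i = N div M j i"
      using Mp[OF a(1,2)] by (simp add: minus_mod_eq_mult_div)
    thus "nhat L M rt k1 K T k2 k3 t j i = (N - N mod M j i) div M j i" using nh[OF a] by simp
  qed
  define EE where "EE = (\<Sum>j=1..s. \<Sum>i=1..L j. real_of_int (e j i))"
  define Lt where "Lt = (\<Sum>j=1..s. L j)"
  have Ltp: "0 < Lt"
  proof -
    have "L 1 \<le> Lt" unfolding Lt_def using s2 by (intro member_le_sum) auto
    moreover have "1 \<le> L 1" using L1 s2 by auto
    ultimately show ?thesis by linarith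
  qed
  have inner: "(\<Sum>i=1..L j. real_of_int (nhat L M rt k1 K T k2 k3 (tsel j) j i * M j i + rt j i))
      = real (L j) * real_of_int N + (\<Sum>i=1..L j. real_of_int (e j i))" if j: "j \<in> {1..s}" for j
  proof -
    have "(\<Sum>i=1..L j. real_of_int (nhat L M rt k1 K T k2 k3 (tsel j) j i * M j i + rt j i))
        = (\<Sum>i=1..L j. real_of_int N + real_of_int (e j i))"
    proof (rule sum.cong)
      fix i assume i: "i \<in> {1..L j}"
      have "nhat L M rt k1 K T k2 k3 (tsel j) j i = N div M j i" using nh[OF j i] tsel_ok j by auto
      thus "real_of_int (nhat L M rt k1 K T k2 k3 (tsel j) j i * M j i + rt j i)
          = real_of_int N + real_of_int (e j i)"
        unfolding e_def by (simp add: algebra_simps flip: of_int_add)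
    qed simp
    also have "\<dots> = real (L j) * real_of_int N + (\<Sum>i=1..L j. real_of_int (e j i))"
      by (simp add: sum.distrib)
    finally show ?thesis .
  qed
  have "(\<Sum>j=1..s. \<Sum>i=1..L j. real_of_int (nhat L M rt k1 K T k2 k3 (tsel j) j i * M j i + rt j i))
      = (\<Sum>j=1..s. real (L j) * real_of_int N + (\<Sum>i=1..L j. real_of_int (e j i)))"
    by (rule sum.cong) (rule refl, rule inner, assumption)
  also have "\<dots> = real Lt * real_of_int N + EE"
    unfolding EE_def Lt_def by (simp add: sum.distrib sum_distrib_right)
  finally have "(\<Sum>j=1..s. \<Sum>i=1..L j. real_of_int (nhat L M rt k1 K T k2 k3 (tsel j) j i * M j i + rt j i))
      / real Lt = real_of_int N + EE / real Lt" using Ltp by (simp add: field_simps)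
  hence Nest_eq: "Nest s L M rt k1 K T k2 k3 tsel = N + rnd (EE / real Lt)"
    unfolding Nest_def Lt_def[symmetric] by (simp add: rnd_add_int)
  have "\<bar>EE\<bar> \<le> (\<Sum>j=1..s. \<Sum>i=1..L j. \<bar>real_of_int (e j i)\<bar>)"
    unfolding EE_def by (rule order_trans[OF sum_abs sum_mono]) (rule sum_abs)
  also have "\<dots> \<le> (\<Sum>j=1..s. \<Sum>i=1..L j. tau j)"
    by (intro sum_mono) (use eb in auto)
  also have "\<dots> = (\<Sum>j=1..s. real (L j) * tau j)" by simp
  finally have "\<bar>EE / real Lt\<bar> \<le> (\<Sum>j=1..s. real (L j) * tau j) / real Lt"
    using Ltp by (simp add: abs_divide divide_right_mono)
  hence "\<bar>rnd (EE / real Lt)\<bar> \<le> rnd ((\<Sum>j=1..s. real (L j) * tau j) / real Lt)" by (rule rnd_abs_mono)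
  hence part3: "\<bar>Nest s L M rt k1 K T k2 k3 tsel - N\<bar>
        \<le> rnd ((\<Sum>j=1..s. real (L j) * tau j) / real (\<Sum>j=1..s. L j))"
    using Nest_eq Lt_def by simp
  show ?thesis using succ part2 part3 by blast
qed

end
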